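(* Let $\beta\in(1,2)$, $\beta_1,\dots,\beta_d$, $\mathbb{K}$, $T_0,T_{-1}$, $I^+$, the self-affine measure $\nu_{\underline{\beta}}$ and the operator $P$ be as in the context. Suppose that $P$ has a fixed point $f$ (i.e. $Pf=f$) which has positive finite integral over $\mathbb{K}$. Then $\nu_{\underline{\beta}}$ is absolutely continuous with respect to Lebesgue measure on $\mathbb{K}$, and the fixed point of $P$ of integral one is the density of $\nu_{\underline{\beta}}$.
   Context: Let $\beta\in(1,2)$ be an algebraic integer none of whose Galois conjugates has modulus $1$. List all its Galois conjugates as $\beta=\beta_1,\dots,\beta_d,\beta_{d+1},\dots,\beta_{d+s},\beta_{d+s+1}$, where $|\beta_1|,\dots,|\beta_d|>1$, $|\beta_{d+1}|,\dots,|\beta_{d+s}|<1$, and $\beta_{d+s+1}$ is real with $|\beta_{d+s+1}|>1$. For $z\in\mathbb{C}$ let $\mathbb{F}_z=\mathbb{R}$ if $z\in\mathbb{R}$ and $\mathbb{F}_z=\mathbb{C}$ otherwise, and let $\mathbb{K}=\prod_{j=1}^d\mathbb{F}_{\beta_j}$, equipped with Lebesgue measure (identifying $\mathbb{C}$ with $\mathbb{R}^2$). For $i\in\mathbb{Z}$ define $T_i:\mathbb{K}\to\mathbb{K}$ by $T_i(x_1,\dots,x_d)=(\beta_1x_1+i,\dots,\beta_dx_d+i)$. For $j\le d$ let $I^+_{\beta_j}=[0,\frac{1}{\beta_j-1}]$ if $\beta_j>1$, $I^+_{\beta_j}=\{x\in\mathbb{R}:|x|\le\frac{1}{|\beta_j|-1}\}$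 if $\beta_j<-1$, and $I^+_{\beta_j}=\{z\in\mathbb{C}:|z|\le\frac{1}{|\beta_j|-1}\}$ if $\beta_j\notin\mathbb{R}$; set $I^+=I^+_{\beta_1}\times\cdots\times I^+_{\beta_d}$. The self-affine measure $\nu_{\underline{\beta}}$ is the unique Borel probability measure on $\mathbb{K}$ satisfying $\nu_{\underline{\beta}}(A)=\frac12\big(\nu_{\underline{\beta}}(T_0(A))+\nu_{\underline{\beta}}(T_{-1}(A))\big)$ for all Borel $A$ (the self-affine measure of the contractions $T_0^{-1},T_{-1}^{-1}$; it is supported in $I^+$). The operator $P$ acts on functions $f:\mathbb{K}\to\mathbb{R}$ by $Pf=\frac{|\beta_1\cdots\beta_d|}{2}\left(f\circ T_0+f\circ T_{-1}\right)$; it is linear. *)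

theory Defs
  imports "HOL-Probability.Probability" "HOL-Computational_Algebra.Computational_Algebra"
begin

text \<open>Coordinates of the space K are indexed by a finite type 'd (one index per
  conjugate beta_j, j = 1..d).\<close>

definition Kset :: "('d \<Rightarrow> complex) \<Rightarrow> ('d \<Rightarrow> complex) set" where
  "Kset bs = {x. \<forall>j. bs j \<in> \<real> \<longrightarrow> x j \<in> \<real>}"

definition lebK :: "('d::finite \<Rightarrow> complex) \<Rightarrow> ('d \<Rightarrow> complex) measure" where
  "lebK bs = PiM UNIV (\<lambda>j. if bs j \<in> \<real> then distr lborel borel complex_of_real else lborel)"

definition Tmap :: "('d \<Rightarrow> complex) \<Rightarrow> int \<Rightarrow> ('d \<Rightarrow> complex) \<Rightarrow> ('d \<Rightarrow> complex)" where
  "Tmap bs i x = (\<lambda>j. bs j * x j + of_int i)"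

definition Pop :: "('d::finite \<Rightarrow> complex) \<Rightarrow> (('d \<Rightarrow> complex) \<Rightarrow> real) \<Rightarrow> ('d \<Rightarrow> complex) \<Rightarrow> real" where
  "Pop bs f x = norm (\<Prod>j\<in>UNIV. bs j) / 2 * (f (Tmap bs 0 x) + f (Tmap bs (-1) x))"

end

theory Submission
  imports Defs
begin



lemma real_coord_scale:
  fixes r :: real and i :: int
  assumes r: "r \<noteq> 0" and A: "A \<in> sets borel"
  shows "ennreal \<bar>r\<bar> * emeasure (distr lborel borel complex_of_real) ((\<lambda>z. complex_of_real r * z + of_int i) -` A)
       = emeasure (distr lborel borel complex_of_real) A"
proof -
  let ?B = "complex_of_real -` A"
  have B: "?B \<in> sets borel" by (rule measurable_sets_borel[OF _ A]) measurable
  have eq: "complex_of_real -` ((\<lambda>z. complex_of_real r * z + of_int i) -` A) = (\<lambda>x. real_of_int i + r * x) -` ?B"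
    by (auto simp: add.commute)
  have "emeasure lborel ?B = emeasure (density (distr lborel borel (\<lambda>x. real_of_int i + r * x)) (\<lambda>_. ennreal \<bar>r\<bar>)) ?B"
    using lborel_real_affine[OF r, of "real_of_int i"] by simp
  also have "\<dots> = ennreal \<bar>r\<bar> * emeasure lborel ((\<lambda>x. real_of_int i + r * x) -` ?B)"
    using B by (simp add: emeasure_density nn_integral_cmult_indicator emeasure_distr)
  finally have *: "emeasure lborel ?B = ennreal \<bar>r\<bar> * emeasure lborel ((\<lambda>x. real_of_int i + r * x) -` ?B)" .
  have C: "((\<lambda>z. complex_of_real r * z + of_int i) -` A) \<in> sets borel"
    by (rule measurable_sets_borel[OF _ A]) measurable
  show ?thesis using A C
    by (simp add: emeasure_distr eq *)
qed



lemma shear_scale: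
  fixes s t u :: real
  assumes s: "s \<noteq> 0" and S: "S \<in> sets (lborel \<Otimes>\<^sub>M lborel :: (real \<times> real) measure)"
  shows "ennreal \<bar>s\<bar> * emeasure (lborel \<Otimes>\<^sub>M lborel) ((\<lambda>(x,y). (x, s*y + t*x + u)) -` S)
       = emeasure (lborel \<Otimes>\<^sub>M lborel) S"
proof -
  let ?G = "(\<lambda>(x,y). (x, s*y + t*x + u)) :: real \<times> real \<Rightarrow> real \<times> real"
  have Gm: "?G \<in> (lborel \<Otimes>\<^sub>M lborel) \<rightarrow>\<^sub>M (lborel \<Otimes>\<^sub>M lborel)" by measurable
  have GS: "?G -` S \<in> sets (lborel \<Otimes>\<^sub>M lborel)"
    using measurable_sets[OF Gm S] by (simp add: space_pair_measure)
  have sec: "Pair x -` S \<in> sets lborel" for x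
    using S by (rule sets_Pair1)
  have aff: "emeasure lborel B = ennreal \<bar>s\<bar> * emeasure lborel ((\<lambda>y. c + s * y) -` B)"
    if B: "B \<in> sets borel" for B c
  proof -
    have "emeasure lborel B = emeasure (density (distr lborel borel (\<lambda>y. c + s * y)) (\<lambda>_. ennreal \<bar>s\<bar>)) B"
      using lborel_real_affine[OF s, of c] by simp
    also have "\<dots> = ennreal \<bar>s\<bar> * emeasure lborel ((\<lambda>y. c + s * y) -` B)"
      using B by (simp add: emeasure_density nn_integral_cmult_indicator emeasure_distr)
    finally show ?thesis .
  qed
  have "emeasure (lborel \<Otimes>\<^sub>M lborel) S = (\<integral>\<^sup>+x. emeasure lborel (Pair x -` S) \<partial>lborel)"
    using S by (rule lborel.emeasure_pair_measure_alt)
  also have "\<dots> = (\<integral>\<^sup>+x. ennreal \<bar>s\<bar> * emeasure lborel (Pair x -` (?G -` S)) \<partial>lborel)"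
  proof (rule nn_integral_cong)
    fix x :: real
    have "Pair x -` (?G -` S) = (\<lambda>y. (t*x + u) + s * y) -` (Pair x -` S)"
      by (auto simp: algebra_simps)
    then show "emeasure lborel (Pair x -` S) = ennreal \<bar>s\<bar> * emeasure lborel (Pair x -` (?G -` S))"
      using aff[of "Pair x -` S" "t*x+u"] sec[of x] by simp
  qed
  also have "\<dots> = ennreal \<bar>s\<bar> * (\<integral>\<^sup>+x. emeasure lborel (Pair x -` (?G -` S)) \<partial>lborel)"
    by (rule nn_integral_cmult) (rule lborel_pair.measurable_emeasure_Pair1[OF GS])
  also have "(\<integral>\<^sup>+x. emeasure lborel (Pair x -` (?G -` S)) \<partial>lborel) = emeasure (lborel \<Otimes>\<^sub>M lborel) (?G -` S)"
    using GS by (rule lborel.emeasure_pair_measure_alt[symmetric])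
  finally show ?thesis by simp
qed



lemma swap_inv:
  assumes S: "S \<in> sets (lborel \<Otimes>\<^sub>M lborel :: (real \<times> real) measure)"
  shows "emeasure (lborel \<Otimes>\<^sub>M lborel) ((\<lambda>(x,y). (y,x)) -` S) = emeasure (lborel \<Otimes>\<^sub>M lborel :: (real \<times> real) measure) S"
proof -
  have "emeasure (lborel \<Otimes>\<^sub>M lborel :: (real \<times> real) measure) S = emeasure (distr (lborel \<Otimes>\<^sub>M lborel) (lborel \<Otimes>\<^sub>M lborel) (\<lambda>(x, y). (y, x))) S"
    by (rule arg_cong[where f="\<lambda>M. emeasure M S", OF lborel_pair.distr_pair_swap])
  also have "\<dots> = emeasure (lborel \<Otimes>\<^sub>M lborel) ((\<lambda>(x,y). (y,x)) -` S \<inter> space (lborel \<Otimes>\<^sub>M lborel))"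
    by (rule emeasure_distr[OF measurable_pair_swap' S])
  finally show ?thesis by (simp add: space_pair_measure)
qed



lemma lborel_complex_eq:
  "(lborel :: complex measure) = distr (lborel \<Otimes>\<^sub>M lborel) borel (\<lambda>(a,b). Complex a b)"
proof (rule lborel_eqI)
  have m: "(\<lambda>(a,b). Complex a b) \<in> borel_measurable (lborel \<Otimes>\<^sub>M lborel)"
  proof -
    have "(\<lambda>(a,b). Complex a b) = (\<lambda>p. complex_of_real (fst p) + \<i> * complex_of_real (snd p))"
      by (auto simp: Complex_eq fun_eq_iff)
    moreover have "(\<lambda>p. complex_of_real (fst p) + \<i> * complex_of_real (snd p)) \<in> borel_measurable (lborel \<Otimes>\<^sub>M lborel)"
      by measurable
    ultimately show ?thesis by simp
  qed
  fix l u :: complex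
  assume le: "\<And>b. b \<in> Basis \<Longrightarrow> l \<bullet> b \<le> u \<bullet> b"
  have "(\<lambda>(a,b). Complex a b) -` box l u = {Re l<..<Re u} \<times> {Im l<..<Im u}"
    by (auto simp: box_def Basis_complex_def inner_complex_def)
  moreover have "Re l \<le> Re u" "Im l \<le> Im u"
    using le[of 1] le[of \<i>] by (auto simp: Basis_complex_def inner_complex_def)
  ultimately show "emeasure (distr (lborel \<Otimes>\<^sub>M lborel) borel (\<lambda>(a,b). Complex a b)) (box l u) = (\<Prod>b\<in>Basis. (u - l) \<bullet> b)"
    using m by (simp add: emeasure_distr lborel.emeasure_pair_measure_Times space_pair_measure
          Basis_complex_def inner_complex_def ennreal_mult)
qed simp


lemma complex_coord_scale:
  fixes \<beta> :: complex assumes nr: "\<beta> \<notin> \<real>"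
  shows "\<exists>c>0. \<forall>i::int. \<forall>A\<in>sets borel. ennreal c * emeasure lborel ((\<lambda>z. \<beta>*z + of_int i) -` A) = emeasure (lborel::complex measure) A"
proof -
  define p where "p = Re \<beta>"
  define q where "q = Im \<beta>"
  have q: "q \<noteq> 0" using nr by (auto simp: q_def complex_is_Real_iff)
  define s1 where "s1 = - q"
  define s2 where "s2 = (p^2 + q^2) / q"
  have s1: "s1 \<noteq> 0" using q by (simp add: s1_def)
  have pq: "p^2 + q^2 > 0" using q by (simp add: add_nonneg_pos)
  have s2: "s2 \<noteq> 0" using q pq by (simp add: s2_def)
  have m: "(\<lambda>(a,b). Complex a b) \<in> borel_measurable (lborel \<Otimes>\<^sub>M lborel)"
  proof -
    have "(\<lambda>(a,b). Complex a b) = (\<lambda>p. complex_of_real (fst p) + \<i> * complex_of_real (snd p))"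
      by (auto simp: Complex_eq fun_eq_iff)
    moreover have "(\<lambda>p. complex_of_real (fst p) + \<i> * complex_of_real (snd p)) \<in> borel_measurable (lborel \<Otimes>\<^sub>M lborel)"
      by measurable
    ultimately show ?thesis by simp
  qed
  have LA: "emeasure (lborel::complex measure) A = emeasure (lborel \<Otimes>\<^sub>M lborel) ((\<lambda>(a,b). Complex a b) -` A)"
    if "A \<in> sets borel" for A
  proof -
    have "emeasure (lborel::complex measure) A = emeasure (distr (lborel \<Otimes>\<^sub>M lborel) borel (\<lambda>(a,b). Complex a b)) A"
      by (rule arg_cong[where f="\<lambda>M. emeasure M A", OF lborel_complex_eq])
    also have "\<dots> = emeasure (lborel \<Otimes>\<^sub>M lborel) ((\<lambda>(a,b). Complex a b) -` A \<inter> space (lborel \<Otimes>\<^sub>M lborel))"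
      using that by (rule emeasure_distr[OF m])
    finally show ?thesis by (simp add: space_pair_measure)
  qed
  have mS: "(\<lambda>(a,b). Complex a b) -` A \<in> sets (lborel \<Otimes>\<^sub>M lborel)" if "A \<in> sets borel" for A
    using measurable_sets[OF m that] by (simp add: space_pair_measure)
  have mG: "(\<lambda>(x,y). (x, s*y + t*x + u)) -` S \<in> sets (lborel \<Otimes>\<^sub>M lborel)"
    if "S \<in> sets (lborel \<Otimes>\<^sub>M lborel :: (real \<times> real) measure)" for S and s t u :: real
  proof -
    have "(\<lambda>(x,y). (x, s*y + t*x + u)) \<in> (lborel \<Otimes>\<^sub>M lborel) \<rightarrow>\<^sub>M (lborel \<Otimes>\<^sub>M lborel :: (real \<times> real) measure)"
      by measurable
    from measurable_sets[OF this that] show ?thesis by (simp add: space_pair_measure)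
  qed
  have mW: "(\<lambda>(x,y). (y,x)) -` S \<in> sets (lborel \<Otimes>\<^sub>M lborel)"
    if "S \<in> sets (lborel \<Otimes>\<^sub>M lborel :: (real \<times> real) measure)" for S
    using measurable_sets[OF measurable_pair_swap' that] by (simp add: space_pair_measure)
  show ?thesis
  proof (intro exI[of _ "\<bar>s1\<bar> * \<bar>s2\<bar>"] conjI allI ballI)
    show "\<bar>s1\<bar> * \<bar>s2\<bar> > 0" using s1 s2 by simp
    fix i :: int and A :: "complex set"
    assume A: "A \<in> sets borel"
    let ?S = "(\<lambda>(a,b). Complex a b) -` A"
    let ?G1 = "(\<lambda>(x,y). (x, s1*y + p*x + real_of_int i)) :: real \<times> real \<Rightarrow> real \<times> real"
    let ?G2 = "(\<lambda>(x,y). (x, s2*y + (-p/q)*x + p*real_of_int i/q)) :: real \<times> real \<Rightarrow> real \<times> real"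
    let ?W = "(\<lambda>(x,y). (y,x)) :: real \<times> real \<Rightarrow> real \<times> real"
    have S: "?S \<in> sets (lborel \<Otimes>\<^sub>M lborel)" using mS[OF A] .
    have key: "Complex (p*a - q*b + real_of_int i) (q*a + p*b) = \<beta> * Complex a b + of_int i" for a b
      by (simp add: complex_eq_iff p_def q_def)
    have "(\<lambda>(a,b). Complex a b) -` ((\<lambda>z. \<beta>*z + of_int i) -` A) = ?G1 -` (?W -` (?G2 -` ?S))"
    proof -
      have "?G2 (?W (?G1 (a,b))) = (p*a - q*b + real_of_int i, q*a + p*b)" for a b
        using q by (simp add: s1_def s2_def field_simps power2_eq_square)
      then have E: "(case ?G2 (?W (?G1 (a,b))) of (x,y) \<Rightarrow> Complex x y) = \<beta> * Complex a b + of_int i" for a b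
        using q by (simp add: s1_def s2_def complex_eq_iff p_def q_def field_simps power2_eq_square)
      show ?thesis
      proof (rule set_eqI)
        fix z :: "real \<times> real"
        obtain a b where z: "z = (a,b)" by fastforce
        show "z \<in> (\<lambda>(a,b). Complex a b) -` ((\<lambda>z. \<beta>*z + of_int i) -` A) \<longleftrightarrow> z \<in> ?G1 -` (?W -` (?G2 -` ?S))"
          using E[of a b] unfolding z by (simp only: vimage_def mem_Collect_eq case_prod_conv) 
      qed
    qed
    then have L1: "emeasure lborel ((\<lambda>z. \<beta>*z + of_int i) -` A) = emeasure (lborel \<Otimes>\<^sub>M lborel) (?G1 -` (?W -` (?G2 -` ?S)))"
      using LA[of "(\<lambda>z. \<beta>*z + of_int i) -` A"] measurable_sets_borel[OF _ A, of "\<lambda>z. \<beta>*z + of_int i"]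
      by simp
    have "emeasure (lborel::complex measure) A = emeasure (lborel \<Otimes>\<^sub>M lborel) ?S" using LA[OF A] .
    also have "\<dots> = ennreal \<bar>s2\<bar> * emeasure (lborel \<Otimes>\<^sub>M lborel) (?G2 -` ?S)"
      using shear_scale[OF s2 S, of "-p/q" "p*real_of_int i/q"] by simp
    also have "emeasure (lborel \<Otimes>\<^sub>M lborel) (?G2 -` ?S) = emeasure (lborel \<Otimes>\<^sub>M lborel) (?W -` (?G2 -` ?S))"
      by (rule swap_inv[OF mG[OF S, of s2 "-p/q" "p*real_of_int i/q"], symmetric])
    also have "\<dots> = ennreal \<bar>s1\<bar> * emeasure (lborel \<Otimes>\<^sub>M lborel) (?G1 -` (?W -` (?G2 -` ?S)))"
      by (rule shear_scale[OF s1 mW[OF mG[OF S, of s2 "-p/q" "p*real_of_int i/q"]], of p "real_of_int i", symmetric])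
    finally show "ennreal (\<bar>s1\<bar> * \<bar>s2\<bar>) * emeasure lborel ((\<lambda>z. \<beta>*z + of_int i) -` A) = emeasure (lborel::complex measure) A"
      using L1 by (simp add: ennreal_mult mult_ac)
  qed
qed




definition cm :: "complex \<Rightarrow> complex measure" where
  "cm \<beta> = (if \<beta> \<in> \<real> then distr lborel borel complex_of_real else lborel)"

lemma lebK_eq: "lebK bs = PiM UNIV (\<lambda>j. cm (bs j))"
  by (simp add: lebK_def cm_def)

lemma sets_cm[simp, measurable_cong]: "sets (cm \<beta>) = sets borel"
  by (simp add: cm_def)

lemma space_cm[simp]: "space (cm \<beta>) = UNIV"
  by (simp add: cm_def)

lemma cm_scale:
  assumes "\<beta> \<noteq> 0"
  shows "\<exists>c>0. \<forall>i::int. \<forall>A\<in>sets borel. ennreal c * emeasure (cm \<beta>) ((\<lambda>z. \<beta>*z + of_int i) -` A) = emeasure (cm \<beta>) A"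
proof (cases "\<beta> \<in> \<real>")
  case True
  then obtain r where r: "\<beta> = complex_of_real r" by (auto elim: Reals_cases)
  with assms have "r \<noteq> 0" by auto
  then show ?thesis using True r real_coord_scale[of r]
    by (intro exI[of _ "\<bar>r\<bar>"]) (auto simp: cm_def)
next
  case False
  then show ?thesis using complex_coord_scale[OF False] by (simp add: cm_def)
qed

lemma sigma_finite_cm: "sigma_finite_measure (cm \<beta>)"
proof (cases "\<beta> \<in> \<real>")
  case False
  then show ?thesis by (simp add: cm_def lborel.sigma_finite_measure_axioms)
next
  case True
  have "\<exists>A::complex set set. countable A \<and> A \<subseteq> sets (distr lborel borel complex_of_real) \<and> \<Union>A = space (distr lborel borel complex_of_real)
     \<and> (\<forall>a\<in>A. emeasure (distr lborel borel complex_of_real) a \<noteq> \<infinity>)"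
  proof (intro exI[of _ "range (\<lambda>n::nat. cball 0 (real n))"] conjI ballI)
    show "\<Union> (range (\<lambda>n::nat. cball (0::complex) (real n))) = space (distr lborel borel complex_of_real)"
      by (auto simp: real_arch_simple)
    fix a assume "a \<in> range (\<lambda>n::nat. cball (0::complex) (real n))"
    then obtain n where a: "a = cball 0 (real n)" by auto
    have "complex_of_real -` a = {- real n .. real n}" by (auto simp: a)
    then show "emeasure (distr lborel borel complex_of_real) a \<noteq> \<infinity>"
      by (simp add: emeasure_distr a)
  qed auto
  then show ?thesis using True by (simp add: cm_def sigma_finite_measure_def)
qed

lemma Tmap_measurable[measurable]: "Tmap bs i \<in> lebK bs \<rightarrow>\<^sub>M lebK bs"
  unfolding Tmap_def lebK_eq
  by (rule measurable_PiM_single'[where f="\<lambda>j x. bs j * x j + of_int i"]) (auto simp: space_PiM)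

lemma lebK_space[simp]: "space (lebK bs) = UNIV"
  by (simp add: lebK_eq space_PiM)

lemma lebK_scale:
  fixes bs :: "'d::finite \<Rightarrow> complex"
  assumes nz: "\<And>j. bs j \<noteq> 0"
  shows "\<exists>C>0. \<forall>i::int. \<forall>A\<in>sets (lebK bs). ennreal C * emeasure (lebK bs) (Tmap bs i -` A) = emeasure (lebK bs) A"
proof -
  from cm_scale[OF nz] have "\<forall>j. \<exists>c>0. \<forall>i::int. \<forall>A\<in>sets borel. ennreal c * emeasure (cm (bs j)) ((\<lambda>z. bs j*z + of_int i) -` A) = emeasure (cm (bs j)) A"
    by blast
  then obtain c where c: "\<And>j. c j > 0"
    "\<And>j i A. A \<in> sets borel \<Longrightarrow> ennreal (c j) * emeasure (cm (bs j)) ((\<lambda>z. bs j*z + of_int i) -` A) = emeasure (cm (bs j)) A"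
    by metis
  interpret product_sigma_finite "\<lambda>j. cm (bs j)"
    by (simp add: product_sigma_finite_def sigma_finite_cm)
  define C where "C = (\<Prod>j\<in>UNIV. c j)"
  show ?thesis
  proof (intro exI[of _ C] conjI allI ballI)
    show "C > 0" unfolding C_def using c(1) by (simp add: prod_pos)
    fix i :: int and A assume A: "A \<in> sets (lebK bs)"
    let ?M = "lebK bs"
    let ?D = "density (distr ?M ?M (Tmap bs i)) (\<lambda>_. ennreal C)"
    have eq: "?D = PiM UNIV (\<lambda>j. cm (bs j))"
    proof (rule PiM_eqI)
      show "finite (UNIV::'d set)" by simp
      show "sets ?D = sets (PiM UNIV (\<lambda>j. cm (bs j)))" by (simp add: lebK_eq)
      fix B assume B: "\<And>j. j \<in> UNIV \<Longrightarrow> B j \<in> sets (cm (bs j))"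
      have PB: "PiE UNIV B \<in> sets ?M" using B by (simp add: lebK_eq sets_PiM_I_finite)
      have Bb: "(\<lambda>z. bs j*z + of_int i) -` B j \<in> sets borel" for j
        by (rule measurable_sets_borel[OF _ B[of j, simplified]]) measurable
      have pre: "Tmap bs i -` PiE UNIV B \<inter> space ?M = PiE UNIV (\<lambda>j. (\<lambda>z. bs j*z + of_int i) -` B j)"
        by (auto simp: Tmap_def PiE_def Pi_def)
      have "emeasure ?D (PiE UNIV B) = ennreal C * emeasure (distr ?M ?M (Tmap bs i)) (PiE UNIV B)"
        using PB by (simp add: emeasure_density nn_integral_cmult_indicator)
      also have "\<dots> = ennreal C * emeasure ?M (PiE UNIV (\<lambda>j. (\<lambda>z. bs j*z + of_int i) -` B j))"
        using PB by (simp add: emeasure_distr pre del: lebK_space)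
      also have "emeasure ?M (PiE UNIV (\<lambda>j. (\<lambda>z. bs j*z + of_int i) -` B j)) = (\<Prod>j\<in>UNIV. emeasure (cm (bs j)) ((\<lambda>z. bs j*z + of_int i) -` B j))"
        unfolding lebK_eq by (rule emeasure_PiM) (use Bb in auto)
      also have "ennreal C * (\<Prod>j\<in>UNIV. emeasure (cm (bs j)) ((\<lambda>z. bs j*z + of_int i) -` B j))
          = (\<Prod>j\<in>UNIV. ennreal (c j) * emeasure (cm (bs j)) ((\<lambda>z. bs j*z + of_int i) -` B j))"
        by (simp add: C_def prod.distrib prod_ennreal less_imp_le c(1))
      also have "\<dots> = (\<Prod>j\<in>UNIV. emeasure (cm (bs j)) (B j))"
        using c(2) B by simp
      finally show "emeasure ?D (PiE UNIV B) = (\<Prod>j\<in>UNIV. emeasure (cm (bs j)) (B j))" .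
    qed
    have "emeasure ?M A = emeasure ?D A" by (subst eq) (simp add: lebK_eq)
    also have "\<dots> = ennreal C * emeasure (distr ?M ?M (Tmap bs i)) A"
      using A by (simp add: emeasure_density nn_integral_cmult_indicator)
    also have "\<dots> = ennreal C * emeasure ?M (Tmap bs i -` A)"
      using A by (simp add: emeasure_distr)
    finally show "ennreal C * emeasure ?M (Tmap bs i -` A) = emeasure ?M A" by simp
  qed
qed


lemma lebK_density_eq:
  fixes bs :: "'d::finite \<Rightarrow> complex"
  assumes nz: "\<And>j. bs j \<noteq> 0"
  shows "\<exists>C>0. \<forall>i::int. density (distr (lebK bs) (lebK bs) (Tmap bs i)) (\<lambda>_. ennreal C) = lebK bs"
proof -
  have "\<exists>C>0. \<forall>i::int. \<forall>A\<in>sets (lebK bs). ennreal C * emeasure (lebK bs) (Tmap bs i -` A) = emeasure (lebK bs) A"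
    by (rule lebK_scale[of bs]) (rule nz)
  then obtain C where C: "C > 0" 
    "\<forall>i::int. \<forall>A\<in>sets (lebK bs). ennreal C * emeasure (lebK bs) (Tmap bs i -` A) = emeasure (lebK bs) A"
    by blast
  have "density (distr (lebK bs) (lebK bs) (Tmap bs i)) (\<lambda>_. ennreal C) = lebK bs" for i :: int
  proof (rule measure_eqI)
    show "sets (density (distr (lebK bs) (lebK bs) (Tmap bs i)) (\<lambda>_. ennreal C)) = sets (lebK bs)"
      by simp
    fix A assume "A \<in> sets (density (distr (lebK bs) (lebK bs) (Tmap bs i)) (\<lambda>_. ennreal C))"
    then have A: "A \<in> sets (lebK bs)" by simp
    then have A': "A \<in> sets (distr (lebK bs) (lebK bs) (Tmap bs i))" by simp
    have "emeasure (density (distr (lebK bs) (lebK bs) (Tmap bs i)) (\<lambda>_. ennreal C)) A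
        = (\<integral>\<^sup>+x. ennreal C * indicator A x \<partial>distr (lebK bs) (lebK bs) (Tmap bs i))"
      by (rule emeasure_density[OF _ A']) simp
    also have "\<dots> = ennreal C * emeasure (distr (lebK bs) (lebK bs) (Tmap bs i)) A"
      by (rule nn_integral_cmult_indicator[OF A'])
    also have "emeasure (distr (lebK bs) (lebK bs) (Tmap bs i)) A = emeasure (lebK bs) (Tmap bs i -` A \<inter> space (lebK bs))"
      by (rule emeasure_distr[OF Tmap_measurable A])
    also have "Tmap bs i -` A \<inter> space (lebK bs) = Tmap bs i -` A" by simp
    finally show "emeasure (density (distr (lebK bs) (lebK bs) (Tmap bs i)) (\<lambda>_. ennreal C)) A = emeasure (lebK bs) A"
      using C(2) A by simp
  qed
  then show ?thesis using C(1) by blast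
qed

lemma scale_integral:
  fixes F :: "'a \<Rightarrow> real"
  assumes eq: "density (distr M M T) (\<lambda>_. ennreal C) = M" and C: "C > 0"
    and T[measurable]: "T \<in> M \<rightarrow>\<^sub>M M" and F: "integrable M F"
  shows "integrable M (\<lambda>x. F (T x))" "integral\<^sup>L M F = C * integral\<^sup>L M (\<lambda>x. F (T x))"
proof -
  have Fm[measurable]: "F \<in> borel_measurable M" using F by (rule borel_measurable_integrable)
  have "integrable (density (distr M M T) (\<lambda>_. ennreal C)) F" using F by (simp add: eq)
  then have "integrable (distr M M T) (\<lambda>x. C *\<^sub>R F x)"
    using C by (subst (asm) integrable_density) auto
  then have "integrable M (\<lambda>x. C * F (T x))"
    by (subst (asm) integrable_distr_eq) auto
  then have "integrable M (\<lambda>x. (1/C) * (C * F (T x)))" by (rule integrable_mult_right)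
  then show "integrable M (\<lambda>x. F (T x))" using C by simp
  have "integral\<^sup>L M F = integral\<^sup>L (density (distr M M T) (\<lambda>_. ennreal C)) F" by (simp add: eq)
  also have "\<dots> = integral\<^sup>L (distr M M T) (\<lambda>x. C *\<^sub>R F x)"
    using C by (subst integral_density) auto
  also have "\<dots> = integral\<^sup>L M (\<lambda>x. C * F (T x))"
    by (subst integral_distr) auto
  finally show "integral\<^sup>L M F = C * integral\<^sup>L M (\<lambda>x. F (T x))" by simp
qed



lemma AE_Kset: "AE x in lebK bs. x \<in> Kset (bs :: 'd::finite \<Rightarrow> complex)"
proof -
  interpret product_sigma_finite "\<lambda>j. cm (bs j)"
    by (simp add: product_sigma_finite_def sigma_finite_cm)
  have "AE x in lebK bs. bs j \<in> \<real> \<longrightarrow> x j \<in> \<real>" for j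
  proof (cases "bs j \<in> \<real>")
    case True
    let ?N = "PiE UNIV (\<lambda>k. if k = j then - \<real> else UNIV) :: ('d \<Rightarrow> complex) set"
    have Rb: "(\<real>::complex set) \<in> sets borel" by (simp add: closed_complex_Reals)
    have "emeasure (lebK bs) ?N = (\<Prod>k\<in>UNIV. emeasure (cm (bs k)) (if k = j then - \<real> else UNIV))"
      unfolding lebK_eq
    proof (rule emeasure_PiM)
      show "finite (UNIV::'d set)" by simp
      fix k show "(if k = j then - \<real> else UNIV) \<in> sets (cm (bs k))"
        using Rb by (simp add: sets.compl_sets[of _ borel, simplified])
    qed
    also have "\<dots> = 0"
    proof (rule prod_zero)
      have e: "complex_of_real -` (- \<real>) = {}" by auto
      then show "\<exists>k\<in>UNIV. emeasure (cm (bs k)) (if k = j then - \<real> else UNIV) = 0"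
      proof (intro bexI[of _ j])
        have "emeasure (distr lborel borel complex_of_real) (- \<real>) = emeasure lborel (complex_of_real -` (- \<real>) \<inter> space lborel)"
          by (rule emeasure_distr) (use Rb in auto)
        then show "emeasure (cm (bs j)) (if j = j then - \<real> else UNIV) = 0"
          using True by (simp add: cm_def e)
      qed simp
    qed simp
    finally have "emeasure (lebK bs) ?N = 0" .
    moreover have "?N \<in> sets (lebK bs)" unfolding lebK_eq
      by (rule sets_PiM_I_finite) (use Rb in \<open>simp_all add: sets.compl_sets[of _ borel, simplified]\<close>)
    ultimately have nul: "?N \<in> null_sets (lebK bs)" by (rule null_setsI)
    have sub: "{x \<in> space (lebK bs). \<not> (bs j \<in> \<real> \<longrightarrow> x j \<in> \<real>)} \<subseteq> ?N"
      by (auto simp: PiE_iff)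
    show ?thesis by (rule AE_I'[OF nul sub])
  qed simp
  then have "AE x in lebK bs. \<forall>j. bs j \<in> \<real> \<longrightarrow> x j \<in> \<real>" by (subst AE_all_countable) blast
  then show ?thesis unfolding Kset_def by simp
qed





lemma nn_mix:
  assumes s0: "sets N0 = sets M" and s1: "sets N1 = sets M"
    and eq: "\<And>A. A \<in> sets M \<Longrightarrow> 2 * emeasure M A = emeasure N0 A + emeasure N1 A"
    and u: "u \<in> borel_measurable M"
  shows "2 * (\<integral>\<^sup>+x. u x \<partial>M) = (\<integral>\<^sup>+x. u x \<partial>N0) + (\<integral>\<^sup>+x. u x \<partial>N1)"
proof -
  note MC0 = measurable_cong_sets[OF s0 refl]
  note MC1 = measurable_cong_sets[OF s1 refl]
  from u show ?thesis
proof (induct rule: borel_measurable_induct)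
  case (cong f g)
  have sp: "space N0 = space M" "space N1 = space M" using sets_eq_imp_space_eq s0 s1 by auto
  have "(\<integral>\<^sup>+x. f x \<partial>M) = (\<integral>\<^sup>+x. g x \<partial>M)" by (rule nn_integral_cong) (use cong in auto)
  moreover have "(\<integral>\<^sup>+x. f x \<partial>N0) = (\<integral>\<^sup>+x. g x \<partial>N0)" by (rule nn_integral_cong) (use cong sp in auto)
  moreover have "(\<integral>\<^sup>+x. f x \<partial>N1) = (\<integral>\<^sup>+x. g x \<partial>N1)" by (rule nn_integral_cong) (use cong sp in auto)
  ultimately show ?case using cong by simp
next
  case (set A)
  then show ?case using eq[OF set] s0 s1 by simp
next
  case (mult u c)
  have m0: "u \<in> borel_measurable N0" using mult(2) by (simp add: MC0)
  have m1: "u \<in> borel_measurable N1" using mult(2) by (simp add: MC1)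
  have "2 * (\<integral>\<^sup>+x. c * u x \<partial>M) = c * (2 * (\<integral>\<^sup>+x. u x \<partial>M))"
    using mult(2) by (simp add: nn_integral_cmult mult_ac)
  also have "\<dots> = c * (\<integral>\<^sup>+x. u x \<partial>N0) + c * (\<integral>\<^sup>+x. u x \<partial>N1)"
    using mult(4) by (simp add: distrib_left)
  also have "\<dots> = (\<integral>\<^sup>+x. c * u x \<partial>N0) + (\<integral>\<^sup>+x. c * u x \<partial>N1)"
    using m0 m1 by (simp add: nn_integral_cmult)
  finally show ?case .
next
  case (add u v)
  have m0: "u \<in> borel_measurable N0" "v \<in> borel_measurable N0"
    using add(1,4) by (simp_all add: MC0)
  have m1: "u \<in> borel_measurable N1" "v \<in> borel_measurable N1"
    using add(1,4) by (simp_all add: MC1)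
  have "2 * (\<integral>\<^sup>+x. v x + u x \<partial>M) = 2 * (\<integral>\<^sup>+x. v x \<partial>M) + 2 * (\<integral>\<^sup>+x. u x \<partial>M)"
    using add(1,4) by (simp add: nn_integral_add distrib_left)
  also have "\<dots> = ((\<integral>\<^sup>+x. v x \<partial>N0) + (\<integral>\<^sup>+x. u x \<partial>N0)) + ((\<integral>\<^sup>+x. v x \<partial>N1) + (\<integral>\<^sup>+x. u x \<partial>N1))"
    using add(3,7) by (simp add: add_ac)
  also have "\<dots> = (\<integral>\<^sup>+x. v x + u x \<partial>N0) + (\<integral>\<^sup>+x. v x + u x \<partial>N1)"
    using m0 m1 by (simp add: nn_integral_add)
  finally show ?case .
next
  case (seq U)
  have m0: "U i \<in> borel_measurable N0" for i using seq(1) by (simp add: MC0)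
  have m1: "U i \<in> borel_measurable N1" for i using seq(1) by (simp add: MC1)
  have inc: "incseq (\<lambda>i. integral\<^sup>N N (U i))" for N
    using seq(4) by (auto simp: incseq_def le_fun_def intro!: nn_integral_mono)
  have conv: "(\<integral>\<^sup>+x. (SUP i. U i) x \<partial>N) = (SUP i. integral\<^sup>N N (U i))"
    if "\<And>i. U i \<in> borel_measurable N" for N
    unfolding SUP_apply by (rule nn_integral_monotone_convergence_SUP[OF seq(4) that])
  have "2 * (\<integral>\<^sup>+x. (SUP i. U i) x \<partial>M) = 2 * (SUP i. integral\<^sup>N M (U i))"
    using conv[OF seq(1)] by simp
  also have "\<dots> = (SUP i. 2 * integral\<^sup>N M (U i))" by (rule SUP_mult_left_ennreal)
  also have "\<dots> = (SUP i. integral\<^sup>N N0 (U i) + integral\<^sup>N N1 (U i))" using seq(3) by simp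
  also have "\<dots> = (SUP i. integral\<^sup>N N0 (U i)) + (SUP i. integral\<^sup>N N1 (U i))"
    by (rule ennreal_SUP_add[OF inc inc])
  also have "\<dots> = (\<integral>\<^sup>+x. (SUP i. U i) x \<partial>N0) + (\<integral>\<^sup>+x. (SUP i. U i) x \<partial>N1)"
    using conv[OF m0] conv[OF m1] by simp
  finally show ?case .
qed
qed


lemma int_mix:
  fixes g :: "'a \<Rightarrow> real"
  assumes pM: "prob_space M" and p0: "prob_space N0" and p1: "prob_space N1"
    and s0: "sets N0 = sets M" and s1: "sets N1 = sets M"
    and eq: "\<And>A. A \<in> sets M \<Longrightarrow> 2 * emeasure M A = emeasure N0 A + emeasure N1 A"
    and g: "g \<in> borel_measurable M" and B: "\<And>x. \<bar>g x\<bar> \<le> B"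
  shows "2 * integral\<^sup>L M g = integral\<^sup>L N0 g + integral\<^sup>L N1 g"
proof -
  define g' where "g' x = g x + B" for x
  have g'0: "0 \<le> g' x" for x using B[of x] by (simp add: g'_def)
  have g'B: "norm (g' x) \<le> 2 * B" for x using B[of x] by (simp add: g'_def)
  have gm0: "g \<in> borel_measurable N0" using g by (simp add: measurable_cong_sets[OF s0 refl])
  have gm1: "g \<in> borel_measurable N1" using g by (simp add: measurable_cong_sets[OF s1 refl])
  have ig: "integrable N g'" if "prob_space N" "g \<in> borel_measurable N" for N
  proof -
    interpret prob_space N by fact
    show ?thesis using g'B that(2) unfolding g'_def by (intro integrable_const_bound[where B="2*B"]) auto
  qed
  have ig2: "integrable N g" if "prob_space N" "g \<in> borel_measurable N" for N
  proof -
    interpret prob_space N by fact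
    show ?thesis using B that(2) by (intro integrable_const_bound[where B="B"]) auto
  qed
  have int': "integral\<^sup>L N g' = integral\<^sup>L N g + B" if "prob_space N" "g \<in> borel_measurable N" for N
  proof -
    interpret prob_space N by fact
    show ?thesis unfolding g'_def using ig2[OF that] by (simp add: prob_space)
  qed
  have nn: "(\<integral>\<^sup>+x. ennreal (g' x) \<partial>N) = ennreal (integral\<^sup>L N g')" if "prob_space N" "g \<in> borel_measurable N" for N
    using ig[OF that] g'0 by (intro nn_integral_eq_integral) auto
  have inn: "0 \<le> integral\<^sup>L N g'" for N by (rule integral_nonneg_AE) (simp add: g'0)
  have um: "(\<lambda>x. ennreal (g' x)) \<in> borel_measurable M" using g by (simp add: g'_def)
  have "2 * (\<integral>\<^sup>+x. ennreal (g' x) \<partial>M) = (\<integral>\<^sup>+x. ennreal (g' x) \<partial>N0) + (\<integral>\<^sup>+x. ennreal (g' x) \<partial>N1)"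
    by (rule nn_mix[OF s0 s1 eq um])
  then have "ennreal (2 * integral\<^sup>L M g') = ennreal (integral\<^sup>L N0 g' + integral\<^sup>L N1 g')"
    using nn[OF pM g] nn[OF p0 gm0] nn[OF p1 gm1] inn
    by (simp add: ennreal_mult ennreal_plus)
  then have "2 * integral\<^sup>L M g' = integral\<^sup>L N0 g' + integral\<^sup>L N1 g'"
    using inn by (subst (asm) ennreal_inj) (auto intro: add_nonneg_nonneg)
  then show ?thesis using int'[OF pM g] int'[OF p0 gm0] int'[OF p1 gm1] by simp
qed

definition Smap :: "('d \<Rightarrow> complex) \<Rightarrow> int \<Rightarrow> ('d \<Rightarrow> complex) \<Rightarrow> ('d \<Rightarrow> complex)" where
  "Smap bs i x = (\<lambda>j. (x j - of_int i) / bs j)"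

lemma Tmap_Smap: "(\<And>j. bs j \<noteq> 0) \<Longrightarrow> Tmap bs i (Smap bs i x) = x"
  by (simp add: Tmap_def Smap_def fun_eq_iff)

lemma Smap_Tmap: "(\<And>j. bs j \<noteq> 0) \<Longrightarrow> Smap bs i (Tmap bs i x) = x"
  by (simp add: Tmap_def Smap_def fun_eq_iff)

lemma Tmap_image: assumes "\<And>j. bs j \<noteq> 0" shows "Tmap bs i ` A = Smap bs i -` A"
proof (rule set_eqI, rule iffI)
  fix x assume "x \<in> Tmap bs i ` A"
  then obtain y where "y \<in> A" "x = Tmap bs i y" by blast
  then show "x \<in> Smap bs i -` A" using assms by (simp add: Smap_Tmap)
next
  fix x assume "x \<in> Smap bs i -` A" then show "x \<in> Tmap bs i ` A" using assms by (metis Tmap_Smap image_eqI vimageD)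
qed

lemma Smap_measurable[measurable]: "Smap bs i \<in> lebK bs \<rightarrow>\<^sub>M lebK bs"
  unfolding Smap_def lebK_eq
  by (rule measurable_PiM_single'[where f="\<lambda>j x. (x j - of_int i) / bs j"]) (auto simp: space_PiM)



lemma integrable_bdd_mult:
  fixes g h :: "'a \<Rightarrow> real"
  assumes h: "integrable M h" and g: "g \<in> borel_measurable M" and B: "\<And>x. \<bar>g x\<bar> \<le> B"
  shows "integrable M (\<lambda>x. g x * h x)"
proof (rule Bochner_Integration.integrable_bound[OF integrable_mult_right[OF h, of B]])
  show "(\<lambda>x. g x * h x) \<in> borel_measurable M" using g h by measurable
  show "AE x in M. norm (g x * h x) \<le> norm (B * h x)"
  proof (intro AE_I2)
    fix x
    have "\<bar>g x\<bar> * \<bar>h x\<bar> \<le> \<bar>B\<bar> * \<bar>h x\<bar>" using B[of x] by (intro mult_right_mono) auto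
    then show "norm (g x * h x) \<le> norm (B * h x)" by (simp add: abs_mult)
  qed
qed

definition Qop :: "('d \<Rightarrow> complex) \<Rightarrow> (('d \<Rightarrow> complex) \<Rightarrow> real) \<Rightarrow> ('d \<Rightarrow> complex) \<Rightarrow> real" where
  "Qop bs g x = (g (Smap bs 0 x) + g (Smap bs (-1) x)) / 2"

lemma Q_inv_M:
  fixes bs :: "'d::finite \<Rightarrow> complex" and h g :: "('d \<Rightarrow> complex) \<Rightarrow> real"
  assumes nz: "\<And>j. bs j \<noteq> 0"
    and dens: "\<And>i::int. density (distr (lebK bs) (lebK bs) (Tmap bs i)) (\<lambda>_. ennreal (norm (\<Prod>j\<in>UNIV. bs j))) = lebK bs"
    and h: "integrable (lebK bs) h" and hfix: "AE x in lebK bs. Pop bs h x = h x"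
    and g[measurable]: "g \<in> borel_measurable (lebK bs)" and B: "\<And>x. \<bar>g x\<bar> \<le> B"
  shows "(\<integral>x. Qop bs g x * h x \<partial>lebK bs) = (\<integral>x. g x * h x \<partial>lebK bs)"
proof -
  let ?M = "lebK bs"
  let ?D = "norm (\<Prod>j\<in>UNIV. bs j)"
  have Dpos: "?D > 0" using nz by simp
  have hm[measurable]: "h \<in> borel_measurable ?M" using h by (rule borel_measurable_integrable)
  have gS: "(\<lambda>x. g (Smap bs i x)) \<in> borel_measurable ?M" for i by measurable
  have hT: "integrable ?M (\<lambda>x. h (Tmap bs i x))" for i
    by (rule scale_integral(1)[OF dens[of i] Dpos Tmap_measurable h])
  have F: "integrable ?M (\<lambda>x. g (Smap bs i x) * h x)" for i
    by (rule integrable_bdd_mult[OF h gS B])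
  have Fi: "(\<integral>x. g (Smap bs i x) * h x \<partial>?M) = ?D * (\<integral>x. g x * h (Tmap bs i x) \<partial>?M)" for i
    using scale_integral(2)[OF dens[of i] Dpos Tmap_measurable F[of i]] by (simp add: Smap_Tmap[OF nz])
  have G: "integrable ?M (\<lambda>x. g x * h (Tmap bs i x))" for i
    by (rule integrable_bdd_mult[OF hT g B])
  have "(\<integral>x. Qop bs g x * h x \<partial>?M) = (\<integral>x. (g (Smap bs 0 x) * h x + g (Smap bs (-1) x) * h x) / 2 \<partial>?M)"
    by (simp add: Qop_def field_simps)
  also have "\<dots> = ((\<integral>x. g (Smap bs 0 x) * h x \<partial>?M) + (\<integral>x. g (Smap bs (-1) x) * h x \<partial>?M)) / 2"
    using F[of 0] F[of "-1"] by simp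
  also have "\<dots> = ?D / 2 * ((\<integral>x. g x * h (Tmap bs 0 x) \<partial>?M) + (\<integral>x. g x * h (Tmap bs (-1) x) \<partial>?M))"
    unfolding Fi[of 0] Fi[of "-1"] by (simp add: field_simps)
  also have "\<dots> = (\<integral>x. ?D / 2 * (g x * h (Tmap bs 0 x)) + ?D / 2 * (g x * h (Tmap bs (-1) x)) \<partial>?M)"
    using integrable_mult_right[OF G[of 0], of "?D/2"] integrable_mult_right[OF G[of "-1"], of "?D/2"]
    by (simp add: distrib_left)
  also have "\<dots> = (\<integral>x. g x * Pop bs h x \<partial>?M)"
    by (rule Bochner_Integration.integral_cong) (simp_all add: Pop_def algebra_simps)
  also have "\<dots> = (\<integral>x. g x * h x \<partial>?M)"
    by (rule integral_cong_AE) (use hfix in \<open>auto simp: Pop_def\<close>)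
  finally show ?thesis .
qed


lemma Q_inv_nu:
  fixes bs :: "'d::finite \<Rightarrow> complex" and g :: "('d \<Rightarrow> complex) \<Rightarrow> real"
  assumes nz: "\<And>j. bs j \<noteq> 0"
    and nu_prob: "prob_space \<nu>" and nu_sets: "sets \<nu> = sets (lebK bs)"
    and nu_sa: "\<And>A. A \<in> sets \<nu> \<Longrightarrow>
          emeasure \<nu> A = (emeasure \<nu> (Tmap bs 0 ` A) + emeasure \<nu> (Tmap bs (-1) ` A)) / 2"
    and g: "g \<in> borel_measurable (lebK bs)" and B: "\<And>x. \<bar>g x\<bar> \<le> B"
  shows "(\<integral>x. Qop bs g x \<partial>\<nu>) = (\<integral>x. g x \<partial>\<nu>)"
proof -
  interpret prob_space \<nu> by fact
  have sp: "space \<nu> = UNIV" using sets_eq_imp_space_eq[OF nu_sets] by simp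
  have gm[measurable]: "g \<in> borel_measurable \<nu>" using g by (simp add: measurable_cong_sets[OF nu_sets refl])
  have Sm[measurable]: "Smap bs i \<in> \<nu> \<rightarrow>\<^sub>M \<nu>" for i
    using Smap_measurable[of bs i] by (simp add: measurable_cong_sets[OF nu_sets nu_sets])
  let ?N = "\<lambda>i. distr \<nu> \<nu> (Smap bs i)"
  have pN: "prob_space (?N i)" for i by (rule prob_space_distr[OF Sm])
  have sN: "sets (?N i) = sets \<nu>" for i by simp
  have eq: "2 * emeasure \<nu> A = emeasure (?N 0) A + emeasure (?N (-1)) A" if A: "A \<in> sets \<nu>" for A
  proof -
    have e: "emeasure (?N i) A = emeasure \<nu> (Tmap bs i ` A)" for i
      using A by (simp add: emeasure_distr sp Tmap_image[OF nz])
    have "2 * emeasure \<nu> A = 2 * ((emeasure \<nu> (Tmap bs 0 ` A) + emeasure \<nu> (Tmap bs (-1) ` A)) / 2)"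
      using nu_sa[OF A] by simp
    also have "\<dots> = emeasure \<nu> (Tmap bs 0 ` A) + emeasure \<nu> (Tmap bs (-1) ` A)"
      unfolding ennreal_times_divide mult.commute[of "2::ennreal"] by (rule ennreal_mult_divide_eq) auto
    finally show ?thesis by (simp add: e)
  qed
  have im: "2 * integral\<^sup>L \<nu> g = integral\<^sup>L (?N 0) g + integral\<^sup>L (?N (-1)) g"
    by (rule int_mix[OF nu_prob pN pN sN sN eq gm B])
  have iN: "integral\<^sup>L (?N i) g = (\<integral>x. g (Smap bs i x) \<partial>\<nu>)" for i
    by (rule integral_distr[OF Sm gm])
  have ig: "integrable \<nu> (\<lambda>x. g (Smap bs i x))" for i
    using B by (intro integrable_const_bound[where B=B]) auto
  have "(\<integral>x. Qop bs g x \<partial>\<nu>) = ((\<integral>x. g (Smap bs 0 x) \<partial>\<nu>) + (\<integral>x. g (Smap bs (-1) x) \<partial>\<nu>)) / 2"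
    unfolding Qop_def using ig[of 0] ig[of "-1"] by simp
  also have "\<dots> = (\<integral>x. g x \<partial>\<nu>)" using im iN[of 0] iN[of "-1"] by simp
  finally show ?thesis .
qed


lemma avg_abs: "\<bar>(a+b)/2 - (c+d)/2\<bar> \<le> (\<bar>a-c\<bar> + \<bar>b-d\<bar>)/(2::real)"
proof -
  have "(a+b)/2 - (c+d)/2 = ((a-c) + (b-d))/2" by (simp add: field_simps)
  also have "\<bar>\<dots>\<bar> = \<bar>(a-c) + (b-d)\<bar>/2" by simp
  also have "\<dots> \<le> (\<bar>a-c\<bar> + \<bar>b-d\<bar>)/2" by (intro divide_right_mono abs_triangle_ineq) simp
  finally show ?thesis .
qed

definition dK :: "('d::finite \<Rightarrow> complex) \<Rightarrow> ('d \<Rightarrow> complex) \<Rightarrow> real" where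
  "dK x y = (\<Sum>j\<in>UNIV. cmod (x j - y j))"

definition rho :: "('d::finite \<Rightarrow> complex) \<Rightarrow> real" where
  "rho bs = Max (range (\<lambda>j. 1 / cmod (bs j)))"

lemma dK_nonneg: "0 \<le> dK x y"
  by (simp add: dK_def sum_nonneg)

lemma rho_facts:
  fixes bs :: "'d::finite \<Rightarrow> complex"
  assumes big: "\<And>j. cmod (bs j) > 1"
  shows "0 \<le> rho bs" "rho bs < 1" "\<And>j. 1 / cmod (bs j) \<le> rho bs"
proof -
  have fin: "finite (range (\<lambda>j. 1 / cmod (bs j)))" by simp
  have ne: "range (\<lambda>j. 1 / cmod (bs j)) \<noteq> {}" by simp
  have "rho bs \<in> range (\<lambda>j. 1 / cmod (bs j))" unfolding rho_def by (rule Max_in[OF fin ne])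
  then obtain j0 where j0: "rho bs = 1 / cmod (bs j0)" by blast
  show "0 \<le> rho bs" using j0 big[of j0] by simp
  show "rho bs < 1" unfolding j0 using big[of j0] by (simp add: divide_less_eq)
  fix j
  show "1 / cmod (bs j) \<le> rho bs" unfolding rho_def by (rule Max_ge[OF fin]) simp
qed

lemma Smap_contract:
  fixes bs :: "'d::finite \<Rightarrow> complex"
  assumes big: "\<And>j. cmod (bs j) > 1"
  shows "dK (Smap bs i x) (Smap bs i y) \<le> rho bs * dK x y"
proof -
  have "cmod (Smap bs i x j - Smap bs i y j) \<le> rho bs * cmod (x j - y j)" for j
  proof -
    have nz: "bs j \<noteq> 0" using big[of j] by auto
    have "Smap bs i x j - Smap bs i y j = (x j - y j) / bs j"
      using nz by (simp add: Smap_def field_simps)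
    then have "cmod (Smap bs i x j - Smap bs i y j) = (1 / cmod (bs j)) * cmod (x j - y j)"
      by (simp add: norm_divide)
    also have "\<dots> \<le> rho bs * cmod (x j - y j)"
      using rho_facts(3)[of bs, OF big, of j] by (intro mult_right_mono) auto
    finally show ?thesis .
  qed
  then show ?thesis unfolding dK_def sum_distrib_left by (intro sum_mono) auto
qed

lemma Qop_measurable:
  assumes g: "g \<in> borel_measurable (lebK bs)"
  shows "Qop bs g \<in> borel_measurable (lebK bs)"
proof -
  have "(\<lambda>x. g (Smap bs i x)) \<in> borel_measurable (lebK bs)" for i
    by (rule measurable_compose[OF Smap_measurable g])
  then show ?thesis unfolding Qop_def by (intro borel_measurable_divide borel_measurable_add) auto
qed

lemma Lip_unique:
  fixes bs :: "'d::finite \<Rightarrow> complex" and g h :: "('d \<Rightarrow> complex) \<Rightarrow> real"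
  assumes big: "\<And>j. cmod (bs j) > 1"
    and QM: "\<And>g B. g \<in> borel_measurable (lebK bs) \<Longrightarrow> (\<And>x. \<bar>g x\<bar> \<le> B) \<Longrightarrow>
              (\<integral>x. Qop bs g x * h x \<partial>lebK bs) = (\<integral>x. g x * h x \<partial>lebK bs)"
    and Qnu: "\<And>g B. g \<in> borel_measurable (lebK bs) \<Longrightarrow> (\<And>x. \<bar>g x\<bar> \<le> B) \<Longrightarrow>
              (\<integral>x. Qop bs g x \<partial>\<nu>) = (\<integral>x. g x \<partial>\<nu>)"
    and h: "integrable (lebK bs) h" and h1: "(\<integral>x. h x \<partial>lebK bs) = 1"
    and nu_prob: "prob_space \<nu>" and nu_sets: "sets \<nu> = sets (lebK bs)"
    and g: "g \<in> borel_measurable (lebK bs)" and B: "\<And>x. \<bar>g x\<bar> \<le> B"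
    and L: "0 \<le> L" and Lip: "\<And>x y. \<bar>g x - g y\<bar> \<le> L * dK x y"
  shows "(\<integral>x. g x * h x \<partial>lebK bs) = (\<integral>x. g x \<partial>\<nu>)"
proof -
  interpret prob_space \<nu> by fact
  let ?M = "lebK bs"
  define G where "G n = (Qop bs ^^ n) g" for n
  have G0: "G 0 = g" and GS: "G (Suc n) = Qop bs (G n)" for n by (simp_all add: G_def)
  have Gm: "G n \<in> borel_measurable ?M" for n
    by (induct n) (simp_all add: G0 GS g Qop_measurable)
  have GB: "\<bar>G n x\<bar> \<le> B" for n x
  proof (induct n arbitrary: x)
    case 0 then show ?case using B by (simp add: G0)
  next
    case (Suc n)
    have "\<bar>G n (Smap bs 0 x) + G n (Smap bs (-1) x)\<bar> \<le> B + B"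
      using Suc[of "Smap bs 0 x"] Suc[of "Smap bs (-1) x"] by linarith
    then show ?case by (simp add: GS Qop_def)
  qed
  have rho: "0 \<le> rho bs" "rho bs < 1" using rho_facts[of bs, OF big] by auto
  have GL: "\<bar>G n x - G n y\<bar> \<le> L * rho bs ^ n * dK x y" for n x y
  proof (induct n arbitrary: x y)
    case 0 then show ?case using Lip by (simp add: G0)
  next
    case (Suc n)
    have c: "\<bar>G n (Smap bs i x) - G n (Smap bs i y)\<bar> \<le> L * rho bs ^ Suc n * dK x y" for i
    proof -
      have "\<bar>G n (Smap bs i x) - G n (Smap bs i y)\<bar> \<le> L * rho bs ^ n * dK (Smap bs i x) (Smap bs i y)"
        by (rule Suc)
      also have "\<dots> \<le> L * rho bs ^ n * (rho bs * dK x y)"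
        using L rho by (intro mult_left_mono Smap_contract[of bs, OF big]) auto
      finally show ?thesis by (simp add: mult_ac)
    qed
    have "\<bar>Qop bs (G n) x - Qop bs (G n) y\<bar>
        \<le> (\<bar>G n (Smap bs 0 x) - G n (Smap bs 0 y)\<bar> + \<bar>G n (Smap bs (-1) x) - G n (Smap bs (-1) y)\<bar>) / 2"
      unfolding Qop_def by (rule avg_abs)
    also have "\<dots> \<le> L * rho bs ^ Suc n * dK x y" using c[of 0] c[of "-1"] by simp
    finally show ?case by (simp add: GS)
  qed
  have GM: "(\<integral>x. G n x * h x \<partial>?M) = (\<integral>x. g x * h x \<partial>?M)" for n
  proof (induct n)
    case (Suc n) then show ?case using QM[OF Gm GB] by (simp add: GS)
  qed (simp add: G0)
  have Gnu: "(\<integral>x. G n x \<partial>\<nu>) = (\<integral>x. g x \<partial>\<nu>)" for n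
  proof (induct n)
    case (Suc n) then show ?case using Qnu[OF Gm GB] by (simp add: GS)
  qed (simp add: G0)
  define c where "c n = G n (\<lambda>_. 0)" for n
  have pt: "(\<lambda>n. G n x - c n) \<longlonglongrightarrow> 0" for x
  proof (rule Lim_null_comparison)
    show "\<forall>\<^sub>F n in sequentially. norm (G n x - c n) \<le> L * dK x (\<lambda>_. 0) * rho bs ^ n"
      using GL[of _ x "\<lambda>_. 0"] by (simp add: c_def mult_ac)
    show "(\<lambda>n. L * dK x (\<lambda>_. 0) * rho bs ^ n) \<longlonglongrightarrow> 0"
      by (intro tendsto_mult_right_zero LIMSEQ_power_zero) (use rho in auto)
  qed
  have hm[measurable]: "h \<in> borel_measurable ?M" using h by (rule borel_measurable_integrable)
  have Gmnu: "G n \<in> borel_measurable \<nu>" for n using Gm[of n] by (simp add: measurable_cong_sets[OF nu_sets refl])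
  have lim1: "(\<lambda>n. \<integral>x. (G n x - c n) * h x \<partial>?M) \<longlonglongrightarrow> (\<integral>x. 0 * h x \<partial>?M)"
  proof (rule integral_dominated_convergence[where w="\<lambda>x. 2 * B * \<bar>h x\<bar>"])
    show "(\<lambda>x. 0 * h x) \<in> borel_measurable ?M" by simp
    show "(\<lambda>x. (G n x - c n) * h x) \<in> borel_measurable ?M" for n using Gm[of n] by measurable
    show "integrable ?M (\<lambda>x. 2 * B * \<bar>h x\<bar>)" using h by auto
    show "AE x in ?M. (\<lambda>n. (G n x - c n) * h x) \<longlonglongrightarrow> 0 * h x"
      using pt by (intro AE_I2 tendsto_mult_right) auto
    show "AE x in ?M. norm ((G n x - c n) * h x) \<le> 2 * B * \<bar>h x\<bar>" for n
    proof (intro AE_I2)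
      fix x
      have "\<bar>G n x - c n\<bar> \<le> 2 * B" using GB[of n x] GB[of n "\<lambda>_. 0"] by (simp add: c_def)
      then have "\<bar>G n x - c n\<bar> * \<bar>h x\<bar> \<le> 2 * B * \<bar>h x\<bar>" by (intro mult_right_mono) auto
      then show "norm ((G n x - c n) * h x) \<le> 2 * B * \<bar>h x\<bar>" by (simp add: abs_mult)
    qed
  qed
  have ie1: "(\<integral>x. (G n x - c n) * h x \<partial>?M) = (\<integral>x. g x * h x \<partial>?M) - c n" for n
  proof -
    have "integrable ?M (\<lambda>x. G n x * h x)" by (rule integrable_bdd_mult[OF h Gm GB])
    then have "(\<integral>x. (G n x - c n) * h x \<partial>?M) = (\<integral>x. G n x * h x \<partial>?M) - c n * (\<integral>x. h x \<partial>?M)"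
      using h by (simp add: left_diff_distrib)
    then show ?thesis using GM[of n] h1 by simp
  qed
  have l1: "c \<longlonglongrightarrow> (\<integral>x. g x * h x \<partial>?M)"
  proof -
    have "(\<lambda>n. (\<integral>x. g x * h x \<partial>?M) - c n) \<longlonglongrightarrow> 0" using lim1 by (simp add: ie1)
    then have "(\<lambda>n. (\<integral>x. g x * h x \<partial>?M) - ((\<integral>x. g x * h x \<partial>?M) - c n)) \<longlonglongrightarrow> (\<integral>x. g x * h x \<partial>?M) - 0"
      by (intro tendsto_diff tendsto_const)
    then show ?thesis by simp
  qed
  have lim2: "(\<lambda>n. \<integral>x. G n x - c n \<partial>\<nu>) \<longlonglongrightarrow> (\<integral>x. 0 \<partial>\<nu>)"
  proof (rule integral_dominated_convergence[where w="\<lambda>x. 2 * B"])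
    show "(\<lambda>x. G n x - c n) \<in> borel_measurable \<nu>" for n using Gmnu[of n] by measurable
    show "AE x in \<nu>. (\<lambda>n. G n x - c n) \<longlonglongrightarrow> 0" using pt by (intro AE_I2) auto
    show "AE x in \<nu>. norm (G n x - c n) \<le> 2 * B" for n
      using GB[of n] GB[of n "\<lambda>_. 0"] by (intro AE_I2) (simp add: c_def abs_le_iff, smt (verit))
  qed auto
  have ie2: "(\<integral>x. G n x - c n \<partial>\<nu>) = (\<integral>x. g x \<partial>\<nu>) - c n" for n
  proof -
    have "integrable \<nu> (G n)" using GB Gmnu by (intro integrable_const_bound[where B=B]) auto
    then show ?thesis using Gnu[of n] by (simp add: prob_space)
  qed
  have l2: "c \<longlonglongrightarrow> (\<integral>x. g x \<partial>\<nu>)"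
  proof -
    have "(\<lambda>n. (\<integral>x. g x \<partial>\<nu>) - c n) \<longlonglongrightarrow> 0" using lim2 by (simp add: ie2)
    then have "(\<lambda>n. (\<integral>x. g x \<partial>\<nu>) - ((\<integral>x. g x \<partial>\<nu>) - c n)) \<longlonglongrightarrow> (\<integral>x. g x \<partial>\<nu>) - 0"
      by (intro tendsto_diff tendsto_const)
    then show ?thesis by simp
  qed
  show ?thesis using LIMSEQ_unique[OF l1 l2] .
qed



definition phi :: "nat \<Rightarrow> complex set \<Rightarrow> complex \<Rightarrow> real" where
  "phi k V z = (if V = UNIV then 1 else min 1 (real k * infdist z (- V)))"

lemma phi_bounds: "0 \<le> phi k V z" "phi k V z \<le> 1"
  by (auto simp: phi_def infdist_nonneg)

lemma min1_abs: "\<bar>min 1 a - min 1 b\<bar> \<le> \<bar>a - (b::real)\<bar>"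
  by (simp add: min_def abs_if)

lemma phi_lip: "\<bar>phi k V z - phi k V w\<bar> \<le> real k * cmod (z - w)"
proof (cases "V = UNIV")
  case True then show ?thesis by (simp add: phi_def)
next
  case False
  have "\<bar>phi k V z - phi k V w\<bar> \<le> \<bar>real k * infdist z (- V) - real k * infdist w (- V)\<bar>"
    using False unfolding phi_def by (simp add: min1_abs)
  also have "\<dots> = real k * \<bar>infdist z (- V) - infdist w (- V)\<bar>"
    by (simp add: abs_mult right_diff_distrib[symmetric])
  also have "\<dots> \<le> real k * dist z w"
    by (intro mult_left_mono infdist_triangle_abs) auto
  finally show ?thesis by (simp add: dist_norm)
qed

lemma phi_meas: "phi k V \<in> borel_measurable borel"
proof (cases "V = UNIV")
  case True then show ?thesis by (simp add: phi_def[abs_def])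
next
  case False
  have "continuous_on UNIV (\<lambda>z. min 1 (real k * infdist z (- V)))"
    by (intro continuous_intros)
  then have "(\<lambda>z. min 1 (real k * infdist z (- V))) \<in> borel_measurable borel"
    by (rule borel_measurable_continuous_onI)
  then show ?thesis using False by (simp add: phi_def[abs_def])
qed

lemma phi_lim:
  assumes V: "open V"
  shows "(\<lambda>k. phi k V z) \<longlonglongrightarrow> indicator V z"
proof (cases "V = UNIV")
  case True then show ?thesis by (simp add: phi_def)
next
  case False
  show ?thesis
  proof (cases "z \<in> V")
    case True
    have d: "infdist z (- V) > 0"
      using V False True by (intro infdist_pos_not_in_closed) auto
    obtain N :: nat where N: "1 < real N * infdist z (- V)"
      using ex_less_of_nat_mult[OF d, of 1] by auto
    have "eventually (\<lambda>k. phi k V z = 1) sequentially"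
    proof (rule eventually_sequentiallyI[of N])
      fix k assume "N \<le> k"
      then have "real N * infdist z (- V) \<le> real k * infdist z (- V)"
        using d by (intro mult_right_mono) auto
      then show "phi k V z = 1" using N False by (simp add: phi_def)
    qed
    then show ?thesis using True by (simp add: tendsto_eventually)
  next
    case notin: False
    then have "phi k V z = 0" for k using False by (simp add: phi_def)
    then show ?thesis using notin by simp
  qed
qed

lemma prod_diff_le:
  fixes a b :: "'i \<Rightarrow> real"
  assumes "finite S" and a: "\<And>i. 0 \<le> a i \<and> a i \<le> 1" and b: "\<And>i. 0 \<le> b i \<and> b i \<le> 1"
  shows "\<bar>(\<Prod>i\<in>S. a i) - (\<Prod>i\<in>S. b i)\<bar> \<le> (\<Sum>i\<in>S. \<bar>a i - b i\<bar>)"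
  using assms(1)
proof (induct S rule: finite_induct)
  case empty then show ?case by simp
next
  case (insert i F)
  let ?A = "\<Prod>i\<in>F. a i" and ?B = "\<Prod>i\<in>F. b i"
  have B: "0 \<le> ?B" "?B \<le> 1" using b by (auto intro: prod_nonneg prod_le_1)
  have "a i * ?A - b i * ?B = a i * (?A - ?B) + (a i - b i) * ?B" by (simp add: algebra_simps)
  then have "\<bar>a i * ?A - b i * ?B\<bar> \<le> \<bar>a i\<bar> * \<bar>?A - ?B\<bar> + \<bar>a i - b i\<bar> * \<bar>?B\<bar>"
    by (metis abs_mult abs_triangle_ineq)
  also have "\<dots> \<le> 1 * \<bar>?A - ?B\<bar> + \<bar>a i - b i\<bar> * 1"
    using a[of i] B by (intro add_mono mult_mono) auto
  also have "\<dots> \<le> (\<Sum>i\<in>F. \<bar>a i - b i\<bar>) + \<bar>a i - b i\<bar>" using insert(3) by simp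
  finally show ?case using insert(1,2) by (simp add: add.commute)
qed


lemma component_borel: "(\<lambda>x. x j) \<in> lebK bs \<rightarrow>\<^sub>M borel"
proof -
  have "(\<lambda>x. x j) \<in> PiM UNIV (\<lambda>j. cm (bs j)) \<rightarrow>\<^sub>M cm (bs j)"
    by (rule measurable_component_singleton) simp
  then show ?thesis unfolding lebK_eq by (simp add: measurable_cong_sets[OF refl sets_cm])
qed

lemma PiE_sets: "(\<And>j. U j \<in> sets borel) \<Longrightarrow> PiE UNIV U \<in> sets (lebK bs)"
  unfolding lebK_eq by (rule sets_PiM_I_finite) auto

lemma box_eq:
  fixes bs :: "'d::finite \<Rightarrow> complex" and h :: "('d \<Rightarrow> complex) \<Rightarrow> real" and U :: "'d \<Rightarrow> complex set"
  assumes LU: "\<And>g B L. g \<in> borel_measurable (lebK bs) \<Longrightarrow> (\<And>x. \<bar>g x\<bar> \<le> B) \<Longrightarrow> 0 \<le> L \<Longrightarrow>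
        (\<And>x y. \<bar>g x - g y\<bar> \<le> L * dK x y) \<Longrightarrow> (\<integral>x. g x * h x \<partial>lebK bs) = (\<integral>x. g x \<partial>\<nu>)"
    and h: "integrable (lebK bs) h"
    and nu_prob: "prob_space \<nu>" and nu_sets: "sets \<nu> = sets (lebK bs)"
    and U: "\<And>j. open (U j)"
  shows "(\<integral>x. indicator (PiE UNIV U) x * h x \<partial>lebK bs) = measure \<nu> (PiE UNIV U)"
proof -
  interpret prob_space \<nu> by fact
  let ?M = "lebK bs"
  define G where "G k x = (\<Prod>j\<in>UNIV. phi k (U j) (x j))" for k x
  have Gm: "G k \<in> borel_measurable ?M" for k
    unfolding G_def[abs_def]
    by (intro borel_measurable_prod measurable_compose[OF component_borel phi_meas])
  have Gnn: "0 \<le> G k x" for k x unfolding G_def by (intro prod_nonneg) (simp add: phi_bounds)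
  have GB: "\<bar>G k x\<bar> \<le> 1" for k x
    using Gnn[of k x] unfolding G_def by (simp add: prod_le_1 phi_bounds)
  have GL: "\<bar>G k x - G k y\<bar> \<le> real k * dK x y" for k x y
  proof -
    have "\<bar>G k x - G k y\<bar> \<le> (\<Sum>j\<in>UNIV. \<bar>phi k (U j) (x j) - phi k (U j) (y j)\<bar>)"
      unfolding G_def by (rule prod_diff_le) (simp_all add: phi_bounds)
    also have "\<dots> \<le> (\<Sum>j\<in>UNIV. real k * cmod (x j - y j))"
      by (intro sum_mono phi_lip)
    finally show ?thesis by (simp add: dK_def sum_distrib_left)
  qed
  have eqk: "(\<integral>x. G k x * h x \<partial>?M) = (\<integral>x. G k x \<partial>\<nu>)" for k
    by (rule LU[OF Gm GB, of "real k"]) (auto intro: GL)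
  have ind: "(\<Prod>j\<in>UNIV. indicator (U j) (x j) :: real) = indicator (PiE UNIV U) x" for x
  proof (cases "x \<in> PiE UNIV U")
    case True
    then have "\<And>j. x j \<in> U j" by (auto simp: PiE_iff)
    then show ?thesis using True by simp
  next
    case False
    then obtain j where j: "x j \<notin> U j" by (auto simp: PiE_iff)
    have "(\<Prod>j\<in>UNIV. indicator (U j) (x j) :: real) = 0"
      by (rule prod_zero) (use j in \<open>auto intro!: exI[of _ j]\<close>)
    then show ?thesis using False by simp
  qed
  have lim: "(\<lambda>k. G k x) \<longlonglongrightarrow> indicator (PiE UNIV U) x" for x
    unfolding G_def ind[symmetric] by (intro tendsto_prod phi_lim U)
  have Us: "U j \<in> sets borel" for j using U by simp
  have PS: "PiE UNIV U \<in> sets ?M" by (rule PiE_sets[OF Us])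
  have hm[measurable]: "h \<in> borel_measurable ?M" using h by (rule borel_measurable_integrable)
  have l1: "(\<lambda>k. \<integral>x. G k x * h x \<partial>?M) \<longlonglongrightarrow> (\<integral>x. indicator (PiE UNIV U) x * h x \<partial>?M)"
  proof (rule integral_dominated_convergence[where w="\<lambda>x. \<bar>h x\<bar>"])
    show "(\<lambda>x. indicator (PiE UNIV U) x * h x) \<in> borel_measurable ?M" using PS by measurable
    show "(\<lambda>x. G k x * h x) \<in> borel_measurable ?M" for k using Gm[of k] by measurable
    show "integrable ?M (\<lambda>x. \<bar>h x\<bar>)" using h by auto
    show "AE x in ?M. (\<lambda>k. G k x * h x) \<longlonglongrightarrow> indicator (PiE UNIV U) x * h x"
      using lim by (intro AE_I2 tendsto_mult_right) auto
    show "AE x in ?M. norm (G k x * h x) \<le> \<bar>h x\<bar>" for k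
    proof (intro AE_I2)
      fix x
      have "\<bar>G k x\<bar> * \<bar>h x\<bar> \<le> 1 * \<bar>h x\<bar>" using GB[of k x] by (intro mult_right_mono) auto
      then show "norm (G k x * h x) \<le> \<bar>h x\<bar>" by (simp add: abs_mult)
    qed
  qed
  have PSn: "PiE UNIV U \<in> sets \<nu>" using PS nu_sets by simp
  have Gmn: "G k \<in> borel_measurable \<nu>" for k using Gm[of k] by (simp add: measurable_cong_sets[OF nu_sets refl])
  have l2: "(\<lambda>k. \<integral>x. G k x \<partial>\<nu>) \<longlonglongrightarrow> (\<integral>x. indicator (PiE UNIV U) x \<partial>\<nu>)"
  proof (rule integral_dominated_convergence[where w="\<lambda>x. 1"])
    show "(\<lambda>x. indicator (PiE UNIV U) x :: real) \<in> borel_measurable \<nu>" using PSn by measurable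
    show "G k \<in> borel_measurable \<nu>" for k by (rule Gmn)
    show "AE x in \<nu>. (\<lambda>k. G k x) \<longlonglongrightarrow> indicator (PiE UNIV U) x" using lim by (intro AE_I2) auto
    show "AE x in \<nu>. norm (G k x) \<le> 1" for k using GB by (intro AE_I2) auto
  qed auto
  have "(\<integral>x. indicator (PiE UNIV U) x \<partial>\<nu>) = measure \<nu> (PiE UNIV U)"
    using PSn by (simp add: integral_indicator)
  then show ?thesis using LIMSEQ_unique[OF l1] l2 eqk by (simp add: )
qed



lemma sets_lebK_sigma:
  "sets (lebK (bs :: 'd::finite \<Rightarrow> complex)) = sigma_sets UNIV {PiE UNIV U | U :: 'd \<Rightarrow> complex set. \<forall>j. open (U j)}"
proof -
  let ?P' = "{{f \<in> PiE UNIV (\<lambda>_::'d. UNIV :: complex set). \<forall>i\<in>j. f i \<in> A i} | A j. j \<in> {UNIV} \<and> A \<in> Pi j (\<lambda>_. Collect open)}"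
  let ?P = "{PiE UNIV U | U :: 'd \<Rightarrow> complex set. \<forall>j. open (U j)}"
  have "sets (lebK bs) = sets (PiM UNIV (\<lambda>i::'d. sigma (UNIV :: complex set) (Collect open)))"
    unfolding lebK_eq
  proof (rule sets_PiM_cong)
    fix j :: 'd
    have "sets (sigma (UNIV :: complex set) (Collect open)) = sets (borel :: complex measure)"
      unfolding borel_def by (rule refl)
    then show "sets (cm (bs j)) = sets (sigma (UNIV :: complex set) (Collect open))" by simp
  qed (rule refl)
  also have "\<dots> = sets (sigma (PiE UNIV (\<lambda>_::'d. UNIV :: complex set)) ?P')"
  proof (rule sets_PiM_sigma)
    fix i :: 'd
    show "\<exists>S\<subseteq>Collect open. countable S \<and> (UNIV :: complex set) = \<Union>S"
      by (intro exI[of _ "{UNIV}"]) auto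
    show "Collect open \<subseteq> Pow (UNIV :: complex set)" by simp
  next
    show "\<And>j. j \<in> {UNIV :: 'd set} \<Longrightarrow> finite j" by simp
    show "\<Union>{UNIV :: 'd set} = UNIV" by simp
  qed
  also have "?P' = ?P"
  proof (intro set_eqI iffI)
    fix X assume "X \<in> ?P'"
    then obtain A where A: "A \<in> Pi UNIV (\<lambda>_. Collect open)" "X = {f \<in> PiE UNIV (\<lambda>_::'d. UNIV::complex set). \<forall>i\<in>UNIV. f i \<in> A i}"
      by blast
    have "X = PiE UNIV A" using A(2) by (auto simp: PiE_iff)
    moreover have "\<forall>i. open (A i)" using A(1) by auto
    ultimately show "X \<in> ?P" by blast
  next
    fix X assume "X \<in> ?P"
    then obtain U where U: "\<forall>j. open (U j)" "X = PiE UNIV U" by auto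
    then have "X = {f \<in> PiE UNIV (\<lambda>_::'d. UNIV :: complex set). \<forall>i\<in>UNIV. f i \<in> U i}" by (auto simp: PiE_iff)
    then show "X \<in> ?P'" using U(1) by blast
  qed
  also have "sets (sigma (PiE UNIV (\<lambda>_::'d. UNIV :: complex set)) ?P) = sigma_sets UNIV ?P"
    by (subst sets_measure_of) auto
  finally show ?thesis .
qed


lemma all_sets_eq:
  fixes bs :: "'d::finite \<Rightarrow> complex" and h :: "('d \<Rightarrow> complex) \<Rightarrow> real"
  assumes box: "\<And>U. (\<And>j. open (U j)) \<Longrightarrow> (\<integral>x. indicator (PiE UNIV U) x * h x \<partial>lebK bs) = measure \<nu> (PiE UNIV U)"
    and h: "integrable (lebK bs) h" and h1: "(\<integral>x. h x \<partial>lebK bs) = 1"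
    and nu_prob: "prob_space \<nu>" and nu_sets: "sets \<nu> = sets (lebK bs)"
    and A: "A \<in> sets (lebK bs)"
  shows "(\<integral>x. indicator A x * h x \<partial>lebK bs) = measure \<nu> A"
proof -
  interpret prob_space \<nu> by fact
  let ?M = "lebK bs"
  let ?P = "{PiE UNIV U | U :: 'd \<Rightarrow> complex set. \<forall>j. open (U j)}"
  have IS: "Int_stable ?P"
  proof (rule Int_stableI)
    fix a b assume "a \<in> ?P" "b \<in> ?P"
    then obtain U V where UV: "\<forall>j. open (U j)" "\<forall>j. open (V j)" "a = PiE UNIV U" "b = PiE UNIV V" by auto
    then have "a \<inter> b = PiE UNIV (\<lambda>j. U j \<inter> V j)" by (auto simp: PiE_iff)
    moreover have "\<forall>j. open (U j \<inter> V j)" using UV by auto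
    ultimately show "a \<inter> b \<in> ?P" by blast
  qed
  have sp: "space \<nu> = UNIV" using sets_eq_imp_space_eq[OF nu_sets] by simp
  have SS: "sets ?M = sigma_sets UNIV ?P" by (rule sets_lebK_sigma)
  have ii: "integrable ?M (\<lambda>x. indicator B x * h x)" if "B \<in> sets ?M" for B
    using integrable_mult_indicator[OF that h] by simp
  have CL: "?P \<subseteq> Pow UNIV" by simp
  have "A \<in> sigma_sets UNIV ?P" using A SS by simp
  from IS CL this show ?thesis
  proof (induct rule: sigma_sets_induct_disjoint)
    case (basic A)
    then obtain U where "\<forall>j. open (U j)" "A = PiE UNIV U" by auto
    then show ?case using box by auto
  next
    case empty
    then show ?case by simp
  next
    case (compl A)
    have As: "A \<in> sets ?M" using compl(1) SS by simp
    have "(\<integral>x. indicator (UNIV - A) x * h x \<partial>?M) = (\<integral>x. h x - indicator A x * h x \<partial>?M)"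
      by (rule Bochner_Integration.integral_cong) (auto split: split_indicator)
    also have "\<dots> = 1 - measure \<nu> A" using h ii[OF As] h1 compl(2) by simp
    also have "\<dots> = measure \<nu> (UNIV - A)"
      using prob_compl[of A] As nu_sets sp by simp
    finally show ?case .
  next
    case (union A)
    have As: "A i \<in> sets ?M" for i using union(2) SS by auto
    have UAs: "(\<Union>i. A i) \<in> sets ?M" using As by auto
    have disj: "A i \<inter> A j = {}" if "i \<noteq> j" for i j
      using union(1) that by (auto simp: disjoint_family_on_def)
    have "(LINT x:(\<Union>i. A i)|?M. h x) = (\<Sum>i. (LINT x:(A i)|?M. h x))"
    proof (rule lebesgue_integral_countable_add)
      show "A i \<in> sets ?M" for i by (rule As)
      show "A i \<inter> A j = {}" if "i \<noteq> j" for i j using disj[OF that] .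
      show "set_integrable ?M (\<Union>i. A i) h"
        unfolding set_integrable_def by (rule integrable_mult_indicator[OF UAs h])
    qed
    then have "(\<integral>x. indicator (\<Union>i. A i) x * h x \<partial>?M) = (\<Sum>i. measure \<nu> (A i))"
      using union(3) by (simp add: set_lebesgue_integral_def)
    also have "\<dots> = measure \<nu> (\<Union>i. A i)"
    proof -
      have "(\<lambda>i. measure \<nu> (A i)) sums measure \<nu> (\<Union>i. A i)"
        by (rule measure_UNION) (use As nu_sets union(1) in auto)
      then show ?thesis by (simp add: sums_iff)
    qed
    finally show ?case .
  qed
qed



theorem proposition2p1:
  fixes b :: real and p :: "int poly" and bs :: "'d::finite \<Rightarrow> complex" and c :: complex
    and \<nu> :: "('d \<Rightarrow> complex) measure" and f :: "('d \<Rightarrow> complex) \<Rightarrow> real"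
  assumes b_range: "1 < b" "b < 2"
    and p_monic: "lead_coeff p = 1"
    and p_irred: "irreducible p"
    and p_root: "poly (map_poly of_int p) (complex_of_real b) = 0"
    and no_unit_conj: "\<And>z::complex. poly (map_poly of_int p) z = 0 \<Longrightarrow> norm z \<noteq> 1"
    and c_root: "poly (map_poly of_int p) c = 0" and c_real: "c \<in> \<real>" and c_big: "norm c > 1"
    and c_ne: "c \<noteq> complex_of_real b"
    and bs_inj: "inj bs"
    and bs_range: "range bs = {z. poly (map_poly of_int p) z = 0 \<and> norm z > 1} - {c}"
    and nu_prob: "prob_space \<nu>"
    and nu_sets: "sets \<nu> = sets (lebK bs)"
    and nu_K: "emeasure \<nu> (Kset bs) = 1"
    and nu_selfaffine: "\<And>A. A \<in> sets \<nu> \<Longrightarrow>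
          emeasure \<nu> A = (emeasure \<nu> (Tmap bs 0 ` A) + emeasure \<nu> (Tmap bs (-1) ` A)) / 2"
    and f_int: "integrable (lebK bs) f"
    and f_pos: "(\<integral>x. f x \<partial>lebK bs) > 0"
    and f_fix: "\<And>x. x \<in> Kset bs \<Longrightarrow> Pop bs f x = f x"
  shows "absolutely_continuous (lebK bs) \<nu>
       \<and> (AE x in lebK bs. f x / (\<integral>y. f y \<partial>lebK bs) \<ge> 0)
       \<and> \<nu> = density (lebK bs) (\<lambda>x. ennreal (f x / (\<integral>y. f y \<partial>lebK bs)))"
proof -
  let ?M = "lebK bs"
  have big: "\<And>j. 1 < cmod (bs j)"
  proof -
    fix j
    have "bs j \<in> range bs" by simp
    then have "bs j \<in> {z. poly (map_poly of_int p) z = 0 \<and> norm z > 1}" using bs_range by blast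
    then show "1 < cmod (bs j)" by simp
  qed
  have nz: "\<And>j. bs j \<noteq> 0"
  proof -
    fix j show "bs j \<noteq> 0" using big[of j] by auto
  qed
  define I where "I = (\<integral>x. f x \<partial>?M)"
  have Ipos: "I > 0" using f_pos by (simp add: I_def)
  have fm[measurable]: "f \<in> borel_measurable ?M" using f_int by (rule borel_measurable_integrable)
  let ?D = "norm (\<Prod>j\<in>UNIV. bs j)"
  have dens: "density (distr ?M ?M (Tmap bs i)) (\<lambda>_. ennreal ?D) = ?M" for i :: int
  proof -
    have "\<exists>C>0. \<forall>i::int. density (distr ?M ?M (Tmap bs i)) (\<lambda>_. ennreal C) = ?M"
      by (rule lebK_density_eq[where bs=bs]) (rule nz)
    then obtain C where C: "C > 0" and Ceq: "\<And>i::int. density (distr ?M ?M (Tmap bs i)) (\<lambda>_. ennreal C) = ?M"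
      by blast
    have intT: "integrable ?M (\<lambda>x. f (Tmap bs i x))" for i :: int
      by (rule scale_integral(1)[OF Ceq C Tmap_measurable f_int])
    have fT: "I = C * (\<integral>x. f (Tmap bs i x) \<partial>?M)" for i :: int
      unfolding I_def by (rule scale_integral(2)[OF Ceq C Tmap_measurable f_int])
    have Pm: "Pop bs f \<in> borel_measurable ?M"
      unfolding Pop_def[abs_def]
      by (intro borel_measurable_times borel_measurable_add borel_measurable_const
            measurable_compose[OF Tmap_measurable fm])
    have "I = (\<integral>x. Pop bs f x \<partial>?M)"
      unfolding I_def
    proof (rule integral_cong_AE[OF fm Pm])
      show "AE x in ?M. f x = Pop bs f x" using AE_Kset[of bs] by eventually_elim (simp add: f_fix)
    qed
    also have "\<dots> = ?D / 2 * ((\<integral>x. f (Tmap bs 0 x) \<partial>?M) + (\<integral>x. f (Tmap bs (-1) x) \<partial>?M))"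
      using intT[of 0] intT[of "-1"] by (simp add: Pop_def)
    also have "\<dots> = ?D / 2 * (I / C + I / C)"
      using fT[of 0] fT[of "-1"] C by (simp add: field_simps)
    also have "\<dots> = (?D / C) * I" by (simp add: field_simps)
    finally have "1 * I = (?D / C) * I" by simp
    then have "?D / C = 1" using Ipos by (metis mult_cancel_right less_irrefl)
    then have "?D = C" using C by (simp add: field_simps)
    then show ?thesis using Ceq[of i] by simp
  qed
  define h where "h x = f x / I" for x
  have h_int: "integrable ?M h" unfolding h_def[abs_def] using f_int by simp
  have h1: "(\<integral>x. h x \<partial>?M) = 1" unfolding h_def using Ipos by (simp add: I_def)
  have hfix: "AE x in ?M. Pop bs h x = h x"
    using AE_Kset[of bs]
  proof eventually_elim
    fix x assume x: "x \<in> Kset bs"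
    have "Pop bs h x = Pop bs f x / I" by (simp add: Pop_def h_def add_divide_distrib[symmetric] times_divide_eq_right)
    then show "Pop bs h x = h x" using f_fix[OF x] by (simp add: h_def)
  qed
  have QM: "(\<integral>x. Qop bs g x * h x \<partial>?M) = (\<integral>x. g x * h x \<partial>?M)"
    if "g \<in> borel_measurable ?M" "\<And>x. \<bar>g x\<bar> \<le> B" for g B
    by (rule Q_inv_M[where bs=bs and h=h and g=g and B=B, OF nz dens h_int hfix that])
  have Qnu: "(\<integral>x. Qop bs g x \<partial>\<nu>) = (\<integral>x. g x \<partial>\<nu>)"
    if "g \<in> borel_measurable ?M" "\<And>x. \<bar>g x\<bar> \<le> B" for g B
    by (rule Q_inv_nu[where bs=bs and \<nu>=\<nu> and g=g and B=B, OF nz nu_prob nu_sets nu_selfaffine that])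
  have LU: "(\<integral>x. g x * h x \<partial>?M) = (\<integral>x. g x \<partial>\<nu>)"
    if "g \<in> borel_measurable ?M" "\<And>x. \<bar>g x\<bar> \<le> B" "0 \<le> L" "\<And>x y. \<bar>g x - g y\<bar> \<le> L * dK x y" for g B L
    by (rule Lip_unique[where bs=bs and h=h and \<nu>=\<nu> and g=g and B=B and L=L, OF big QM Qnu h_int h1 nu_prob nu_sets that])
  have box: "(\<integral>x. indicator (PiE UNIV U) x * h x \<partial>?M) = measure \<nu> (PiE UNIV U)"
    if "\<And>j. open (U j)" for U
    by (rule box_eq[where bs=bs and h=h and \<nu>=\<nu> and U=U, OF LU h_int nu_prob nu_sets that])
  have allA: "(\<integral>x. indicator A x * h x \<partial>?M) = measure \<nu> A" if "A \<in> sets ?M" for A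
    by (rule all_sets_eq[where bs=bs and h=h and \<nu>=\<nu> and A=A, OF box h_int h1 nu_prob nu_sets that])
  interpret nu: prob_space \<nu> by (rule nu_prob)
  have hm[measurable]: "h \<in> borel_measurable ?M" using h_int by (rule borel_measurable_integrable)
  have hnn: "AE x in ?M. 0 \<le> h x"
  proof -
    define A where "A = {x \<in> space ?M. h x < 0}"
    have As: "A \<in> sets ?M" unfolding A_def by measurable
    have iA: "integrable ?M (\<lambda>x. - (indicator A x * h x))"
      using integrable_mult_indicator[OF As h_int] by simp
    have nnA: "AE x in ?M. 0 \<le> - (indicator A x * h x)"
      by (intro AE_I2) (auto simp: A_def split: split_indicator)
    have "(\<integral>x. - (indicator A x * h x) \<partial>?M) = - measure \<nu> A" using allA[OF As] by simp
    moreover have "0 \<le> (\<integral>x. - (indicator A x * h x) \<partial>?M)" using nnA by (rule integral_nonneg_AE)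
    moreover have "0 \<le> measure \<nu> A" by (rule measure_nonneg)
    ultimately have "(\<integral>x. - (indicator A x * h x) \<partial>?M) = 0" by linarith
    then have "AE x in ?M. - (indicator A x * h x) = 0"
      using integral_nonneg_eq_0_iff_AE[OF iA nnA] by simp
    then show ?thesis
    proof eventually_elim
      fix x assume e: "- (indicator A x * h x) = 0"
      show "0 \<le> h x"
      proof (rule ccontr)
        assume n: "\<not> 0 \<le> h x"
        then have "x \<in> A" by (simp add: A_def)
        then show False using e n by simp
      qed
    qed
  qed
  have nu_eq: "\<nu> = density ?M (\<lambda>x. ennreal (h x))"
  proof (rule measure_eqI)
    show "sets \<nu> = sets (density ?M (\<lambda>x. ennreal (h x)))" using nu_sets by simp
    fix A assume "A \<in> sets \<nu>"
    then have As: "A \<in> sets ?M" using nu_sets by simp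
    have "emeasure (density ?M (\<lambda>x. ennreal (h x))) A = (\<integral>\<^sup>+x. ennreal (h x) * indicator A x \<partial>?M)"
      by (rule emeasure_density) (auto simp: As)
    also have "\<dots> = (\<integral>\<^sup>+x. ennreal (indicator A x * h x) \<partial>?M)"
      by (rule nn_integral_cong) (simp split: split_indicator)
    also have "\<dots> = ennreal (\<integral>x. indicator A x * h x \<partial>?M)"
    proof (rule nn_integral_eq_integral)
      show "integrable ?M (\<lambda>x. indicator A x * h x)" using integrable_mult_indicator[OF As h_int] by simp
      show "AE x in ?M. 0 \<le> indicator A x * h x" using hnn by eventually_elim (simp split: split_indicator)
    qed
    also have "\<dots> = emeasure \<nu> A" using allA[OF As] As nu_sets by (simp add: nu.emeasure_eq_measure)
    finally show "emeasure \<nu> A = emeasure (density ?M (\<lambda>x. ennreal (h x))) A" by simp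
  qed
  have hdef: "(\<lambda>x. f x / (\<integral>y. f y \<partial>lebK bs)) = h" by (simp add: h_def[abs_def] I_def)
  have ac: "absolutely_continuous ?M \<nu>" unfolding nu_eq by (rule absolutely_continuousI_density) simp
  have ae: "AE x in ?M. f x / (\<integral>y. f y \<partial>lebK bs) \<ge> 0" using hnn by (simp add: h_def I_def)
  have de: "\<nu> = density ?M (\<lambda>x. ennreal (f x / (\<integral>y. f y \<partial>lebK bs)))" using nu_eq by (simp add: h_def I_def)
  show ?thesis using ac ae de by blast
qed


end
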